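(* Let $\mathbb{F}$ be any field and $d\ge 1$. Suppose $T,A\in GL(d,\mathbb{F})$ commute, and that $T$ is conjugate in $GL(d,\mathbb{F})$ to $TA$ and also to $TA^2$. Then every eigenvalue of $A$ (in an algebraic closure of $\mathbb{F}$) is a root of unity. *)

theory Defs
  imports "Jordan_Normal_Form.Jordan_Normal_Form" "HOL-Algebra.Algebraic_Closure_Type"
begin
end

theory Submission
  imports Defs "Jordan_Normal_Form.Schur_Decomposition" "Jordan_Normal_Form.DL_Rank" "HOL-Combinatorics.List_Permutation"
begin


definition lowr :: "'a mat \<Rightarrow> 'a mat" where
  "lowr A = mat (dim_row A - 1) (dim_col A - 1) (\<lambda>(i,j). A $$ (Suc i, Suc j))"

definition c0z :: "'a::zero mat \<Rightarrow> bool" where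
  "c0z A \<longleftrightarrow> (\<forall>i. 0 < i \<and> i < dim_row A \<longrightarrow> A $$ (i,0) = 0)"

lemma lowr_carrier: "A \<in> carrier_mat (Suc m) (Suc m) \<Longrightarrow> lowr A \<in> carrier_mat m m"
  unfolding lowr_def by auto

lemma lowr_index: "A \<in> carrier_mat (Suc m) (Suc m) \<Longrightarrow> i < m \<Longrightarrow> j < m \<Longrightarrow> lowr A $$ (i,j) = A $$ (Suc i, Suc j)"
  unfolding lowr_def by auto

lemma mult_entry:
  fixes A B :: "'a::comm_ring_1 mat"
  assumes A: "A \<in> carrier_mat (Suc m) (Suc m)" and B: "B \<in> carrier_mat (Suc m) (Suc m)"
    and i: "i < Suc m" and j: "j < Suc m"
  shows "(A*B) $$ (i,j) = A$$(i,0) * B$$(0,j) + (\<Sum>l<m. A$$(i,Suc l) * B$$(Suc l, j))"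
proof -
  have "(A*B) $$ (i,j) = (\<Sum>l\<in>{0..<Suc m}. A$$(i,l) * B$$(l,j))"
    using A B i j by (auto simp: scalar_prod_def)
  also have "\<dots> = A$$(i,0) * B$$(0,j) + (\<Sum>l\<in>{0..<m}. A$$(i,Suc l) * B$$(Suc l, j))"
    by (subst sum.atLeast0_lessThan_Suc_shift) simp
  finally show ?thesis by (simp add: atLeast0LessThan)
qed

lemma mult_c0z:
  fixes A B :: "'a::comm_ring_1 mat"
  assumes A: "A \<in> carrier_mat (Suc m) (Suc m)" and B: "B \<in> carrier_mat (Suc m) (Suc m)"
    and cA: "c0z A" and cB: "c0z B"
  shows "c0z (A*B)" "(A*B) $$ (0,0) = A$$(0,0) * B$$(0,0)" "lowr (A*B) = lowr A * lowr B"
proof -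
  have a: "\<And>i. 0 < i \<Longrightarrow> i < Suc m \<Longrightarrow> A $$ (i,0) = 0" using cA A unfolding c0z_def by auto
  have b: "\<And>i. 0 < i \<Longrightarrow> i < Suc m \<Longrightarrow> B $$ (i,0) = 0" using cB B unfolding c0z_def by auto
  show "c0z (A*B)" unfolding c0z_def
  proof (intro allI impI)
    fix i assume "0 < i \<and> i < dim_row (A*B)"
    then have i: "0 < i" "i < Suc m" using A by auto
    show "(A*B) $$ (i,0) = 0" by (subst mult_entry[OF A B i(2)]) (use a[OF i] b in auto)
  qed
  show "(A*B) $$ (0,0) = A$$(0,0) * B$$(0,0)" by (subst mult_entry[OF A B]) (use b in auto)
  show "lowr (A*B) = lowr A * lowr B"
  proof (rule eq_matI)
    fix i j assume i: "i < dim_row (lowr A * lowr B)" and j: "j < dim_col (lowr A * lowr B)"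
    then have i': "i < m" and j': "j < m" using lowr_carrier[OF A] lowr_carrier[OF B] by auto
    have "lowr (A*B) $$ (i,j) = (A*B) $$ (Suc i, Suc j)"
      using lowr_index[of "A*B" m i j] A B i' j' by auto
    also have "\<dots> = (\<Sum>l<m. A$$(Suc i,Suc l) * B$$(Suc l, Suc j))"
      by (subst mult_entry[OF A B]) (use a[of "Suc i"] i' j' in auto)
    also have "\<dots> = (lowr A * lowr B) $$ (i,j)"
      using lowr_carrier[OF A] lowr_carrier[OF B] i' j'
      by (auto simp: scalar_prod_def lowr_index[OF A] lowr_index[OF B] atLeast0LessThan intro!: sum.cong)
    finally show "lowr (A*B) $$ (i,j) = (lowr A * lowr B) $$ (i,j)" .
  qed (insert lowr_carrier[OF A] lowr_carrier[OF B] A B, auto simp: lowr_def)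
qed

lemma one_c0z: "c0z (1\<^sub>m n)" unfolding c0z_def by auto

lemma lowr_one: "lowr (1\<^sub>m (Suc m)) = 1\<^sub>m m"
  by (rule eq_matI) (auto simp: lowr_def)

lemma pow_c0z:
  fixes A :: "'a::comm_ring_1 mat"
  assumes A: "A \<in> carrier_mat (Suc m) (Suc m)" and cA: "c0z A"
  shows "c0z (A ^\<^sub>m k) \<and> (A ^\<^sub>m k) $$ (0,0) = A$$(0,0)^k \<and> lowr (A ^\<^sub>m k) = lowr A ^\<^sub>m k"
proof (induction k)
  case 0
  then show ?case using A by (simp add: one_c0z lowr_one) (metis carrier_matD(1) lowr_carrier)
next
  case (Suc k)
  have Ak: "A ^\<^sub>m k \<in> carrier_mat (Suc m) (Suc m)" using A by auto
  show ?case using mult_c0z[OF Ak A] Suc cA by (simp add: mult.commute)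
qed

lemma cp_c0z:
  fixes A :: "'a::comm_ring_1 mat"
  assumes A: "A \<in> carrier_mat (Suc m) (Suc m)" and cA: "c0z A"
  shows "char_poly A = [:- A$$(0,0), 1:] * char_poly (lowr A)"
proof -
  let ?a = "mat 1 1 (\<lambda>_. A$$(0,0))"
  let ?b = "mat 1 m (\<lambda>(_,j). A$$(0,Suc j))"
  have eq: "A = four_block_mat ?a ?b (0\<^sub>m m 1) (lowr A)"
  proof (rule eq_matI)
    fix i j assume "i < dim_row (four_block_mat ?a ?b (0\<^sub>m m 1) (lowr A))"
      "j < dim_col (four_block_mat ?a ?b (0\<^sub>m m 1) (lowr A))"
    then have i: "i < Suc m" and j: "j < Suc m" using lowr_carrier[OF A] by auto
    show "A $$ (i,j) = four_block_mat ?a ?b (0\<^sub>m m 1) (lowr A) $$ (i,j)"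
      using i j lowr_carrier[OF A] cA A unfolding c0z_def
      by (cases i; cases j) (auto simp: lowr_index[OF A])
  qed (insert A lowr_carrier[OF A], auto)
  have "char_poly ?a = [:- A$$(0,0), 1:]"
    by (subst char_poly_upper_triangular[of _ 1]) (auto simp: upper_triangular_def diag_mat_def)
  then show ?thesis
    by (subst eq, subst char_poly_four_block_zeros_col) (auto intro: lowr_carrier[OF A])
qed




lemma basis_mat:
  fixes v :: "'a::field vec"
  assumes v: "v \<in> carrier_vec n" and v0: "v \<noteq> 0\<^sub>v n"
  shows "\<exists>P Q. P \<in> carrier_mat n n \<and> Q \<in> carrier_mat n n \<and> P * Q = 1\<^sub>m n \<and> Q * P = 1\<^sub>m n \<and> col P 0 = v"
proof -
  let ?b = "basis_completion v"
  note bc = vec_space.basis_completion[OF v v0]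
  define P where "P = mat_of_cols n ?b"
  have P: "P \<in> carrier_mat n n" unfolding P_def using bc by auto
  have cols: "cols P = ?b" unfolding P_def using bc by (intro cols_mat_of_cols) auto
  have rk: "vec_space.rank n P = n"
    by (rule vec_space.lin_indpt_full_rank[OF P]) (use bc cols in auto)
  have "det P \<noteq> 0" using vec_space.det_rank_iff[OF P] rk by auto
  from det_non_zero_imp_unit[OF P this, of undefined]
  obtain Q where Q: "Q \<in> carrier_mat n n" "P * Q = 1\<^sub>m n" "Q * P = 1\<^sub>m n"
    unfolding Units_def ring_mat_def by auto
  have "n > 0" using v v0 by (cases n) auto
  have "col P 0 = ?b ! 0" using cols \<open>n > 0\<close> P by (metis carrier_matD(2) cols_nth)
  also have "\<dots> = v" using bc \<open>n>0\<close> by (cases ?b) auto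
  finally show ?thesis using P Q by blast
qed

lemma eigen_exists:
  fixes B :: "'a::alg_closed_field mat"
  assumes B: "B \<in> carrier_mat (Suc m) (Suc m)"
  shows "\<exists>\<mu> v. v \<in> carrier_vec (Suc m) \<and> v \<noteq> 0\<^sub>v (Suc m) \<and> B *\<^sub>v v = \<mu> \<cdot>\<^sub>v v"
proof -
  have "Polynomial.degree (char_poly B) > 0" using degree_monic_char_poly[OF B] by auto
  then obtain \<mu> where "poly (char_poly B) \<mu> = 0" using alg_closed_imp_poly_has_root by blast
  then have "eigenvalue B \<mu>" using eigenvalue_root_char_poly[OF B] by auto
  then show ?thesis unfolding eigenvalue_def eigenvector_def using B by auto
qed

context
  fixes P Q :: "'a::comm_ring_1 mat" and n :: nat
  assumes P: "P \<in> carrier_mat n n" and Q: "Q \<in> carrier_mat n n"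
    and PQ: "P * Q = 1\<^sub>m n" and QP: "Q * P = 1\<^sub>m n"
begin

lemma PQZ: "Z \<in> carrier_mat n k \<Longrightarrow> P * (Q * Z) = Z"
  by (metis P PQ Q assoc_mult_mat left_mult_one_mat)

lemma conj_mult: "M \<in> carrier_mat n n \<Longrightarrow> N \<in> carrier_mat n n \<Longrightarrow>
   Q * (M * N) * P = (Q * M * P) * (Q * N * P)"
  using P Q by (simp add: assoc_mult_mat[of _ n n _ n _ n] PQZ[of "N * P" n])

lemma conj_pow: "M \<in> carrier_mat n n \<Longrightarrow> Q * (M ^\<^sub>m k) * P = (Q * M * P) ^\<^sub>m k"
proof (induction k)
  case 0
  then show ?case using QP Q by simp
next
  case (Suc k)
  then show ?case using conj_mult[of "M ^\<^sub>m k" M] by simp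
qed

lemma conj_cp: "M \<in> carrier_mat n n \<Longrightarrow> char_poly (Q * M * P) = char_poly M"
proof -
  assume M: "M \<in> carrier_mat n n"
  have "similar_mat_wit M (Q * M * P) P Q"
    unfolding similar_mat_wit_def Let_def using M P Q PQ QP
    by (auto simp: assoc_mult_mat[of _ n n _ n _ n] PQZ)
  then show ?thesis by (metis char_poly_similar similar_mat_def similar_mat_sym)
qed

end




fun iterv :: "'a::comm_ring_1 mat \<Rightarrow> 'a list \<Rightarrow> 'a vec \<Rightarrow> 'a vec" where
  "iterv B [] x = x"
| "iterv B (d # ds) x = iterv B ds (B *\<^sub>v x - d \<cdot>\<^sub>v x)"

lemma iterv_append: "iterv B (xs @ ys) x = iterv B ys (iterv B xs x)"
  by (induction xs arbitrary: x) auto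

lemma iterv_carrier: "B \<in> carrier_mat n n \<Longrightarrow> x \<in> carrier_vec n \<Longrightarrow> iterv B ds x \<in> carrier_vec n"
  by (induction ds arbitrary: x) auto

definition lowv :: "'a vec \<Rightarrow> 'a vec" where
  "lowv y = vec (dim_vec y - 1) (\<lambda>i. y $ Suc i)"

lemma lowv_carrier: "y \<in> carrier_vec (Suc m) \<Longrightarrow> lowv y \<in> carrier_vec m"
  unfolding lowv_def by auto

lemma lowv_index: "y \<in> carrier_vec (Suc m) \<Longrightarrow> i < m \<Longrightarrow> lowv y $ i = y $ Suc i"
  unfolding lowv_def by auto

lemma vec_entry:
  fixes B :: "'a::comm_ring_1 mat"
  assumes B: "B \<in> carrier_mat (Suc m) (Suc m)" and y: "y \<in> carrier_vec (Suc m)" and i: "i < Suc m"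
  shows "(B *\<^sub>v y) $ i = B$$(i,0) * y$0 + (\<Sum>l<m. B$$(i,Suc l) * y$(Suc l))"
proof -
  have "(B *\<^sub>v y) $ i = (\<Sum>l\<in>{0..<Suc m}. B$$(i,l) * y$l)"
    using B y i by (auto simp: scalar_prod_def)
  also have "\<dots> = B$$(i,0) * y$0 + (\<Sum>l\<in>{0..<m}. B$$(i,Suc l) * y$(Suc l))"
    by (subst sum.atLeast0_lessThan_Suc_shift) simp
  finally show ?thesis by (simp add: atLeast0LessThan)
qed

lemma lowv_step:
  fixes B :: "'a::comm_ring_1 mat"
  assumes B: "B \<in> carrier_mat (Suc m) (Suc m)" and cB: "c0z B" and y: "y \<in> carrier_vec (Suc m)"
  shows "lowv (B *\<^sub>v y - d \<cdot>\<^sub>v y) = lowr B *\<^sub>v lowv y - d \<cdot>\<^sub>v lowv y"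
proof (rule eq_vecI)
  fix i assume "i < dim_vec (lowr B *\<^sub>v lowv y - d \<cdot>\<^sub>v lowv y)"
  then have i: "i < m" using lowr_carrier[OF B] lowv_carrier[OF y] by auto
  have b0: "B $$ (Suc i, 0) = 0" using cB B i unfolding c0z_def by auto
  have "(B *\<^sub>v y) $ Suc i = (\<Sum>l<m. B$$(Suc i,Suc l) * y$(Suc l))"
    by (subst vec_entry[OF B y]) (use i b0 in auto)
  also have "\<dots> = (lowr B *\<^sub>v lowv y) $ i"
    using i lowr_carrier[OF B] lowv_carrier[OF y]
    by (auto simp: scalar_prod_def lowr_index[OF B] lowv_index[OF y] atLeast0LessThan intro!: sum.cong)
  finally show "lowv (B *\<^sub>v y - d \<cdot>\<^sub>v y) $ i = (lowr B *\<^sub>v lowv y - d \<cdot>\<^sub>v lowv y) $ i"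
    using i B y lowr_carrier[OF B] lowv_carrier[OF y] by (auto simp: lowv_def)
qed (insert B y lowr_carrier[OF B], auto simp: lowv_def)

lemma lowv_iter:
  fixes B :: "'a::comm_ring_1 mat"
  assumes B: "B \<in> carrier_mat (Suc m) (Suc m)" and cB: "c0z B"
  shows "y \<in> carrier_vec (Suc m) \<Longrightarrow> lowv (iterv B ds y) = iterv (lowr B) ds (lowv y)"
proof (induction ds arbitrary: y)
  case Nil
  then show ?case by simp
next
  case (Cons d ds)
  have "B *\<^sub>v y - d \<cdot>\<^sub>v y \<in> carrier_vec (Suc m)" using B Cons.prems by auto
  then show ?case using Cons lowv_step[OF B cB Cons.prems] by simp
qed

lemma conj_col0:
  fixes P Q B :: "'a::field mat"
  assumes P: "P \<in> carrier_mat n n" and Q: "Q \<in> carrier_mat n n" and QP: "Q * P = 1\<^sub>m n"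
    and B: "B \<in> carrier_mat n n" and v: "col P 0 = v" and ev: "B *\<^sub>v v = \<mu> \<cdot>\<^sub>v v" and n: "0 < n"
  shows "c0z (Q * B * P)" "(Q * B * P) $$ (0,0) = \<mu>"
proof -
  have cP: "col P 0 \<in> carrier_vec n" using P n by auto
  have "col (Q * B * P) 0 = Q *\<^sub>v col (B * P) 0"
    using P Q B n by (subst assoc_mult_mat[OF Q B P]) (rule col_mult2[of _ n n _ n], auto)
  also have "col (B * P) 0 = B *\<^sub>v col P 0" by (rule col_mult2[OF B P n])
  also have "Q *\<^sub>v (B *\<^sub>v col P 0) = \<mu> \<cdot>\<^sub>v (Q *\<^sub>v col P 0)"
    unfolding v ev by (rule mult_mat_vec[OF Q]) (use cP v in simp)
  also have "Q *\<^sub>v col P 0 = col (Q * P) 0" by (rule col_mult2[OF Q P n, symmetric])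
  also have "\<dots> = unit_vec n 0" using QP n by simp
  finally have c: "col (Q * B * P) 0 = \<mu> \<cdot>\<^sub>v unit_vec n 0" .
  have e: "\<And>i. i < n \<Longrightarrow> (Q * B * P) $$ (i,0) = (if i = 0 then \<mu> else 0)"
  proof -
    fix i assume i: "i < n"
    have "(Q * B * P) $$ (i,0) = col (Q * B * P) 0 $ i" using i P Q B n by simp
    then show "(Q * B * P) $$ (i,0) = (if i = 0 then \<mu> else 0)" using c i by simp
  qed
  show "c0z (Q * B * P)" unfolding c0z_def using e Q by auto
  show "(Q * B * P) $$ (0,0) = \<mu>" using e n by auto
qed

lemma annihilate:
  fixes B :: "'a::alg_closed_field mat"
  shows "B \<in> carrier_mat n n \<Longrightarrow> \<exists>ds. \<forall>x \<in> carrier_vec n. iterv B ds x = 0\<^sub>v n"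
proof (induction n arbitrary: B)
  case 0
  then show ?case by (intro exI[of _ "[]"]) auto
next
  case (Suc m)
  note B = Suc.prems
  obtain \<mu> v where v: "v \<in> carrier_vec (Suc m)" "v \<noteq> 0\<^sub>v (Suc m)" "B *\<^sub>v v = \<mu> \<cdot>\<^sub>v v"
    using eigen_exists[OF B] by blast
  obtain P Q where PQ: "P \<in> carrier_mat (Suc m) (Suc m)" "Q \<in> carrier_mat (Suc m) (Suc m)"
    "P * Q = 1\<^sub>m (Suc m)" "Q * P = 1\<^sub>m (Suc m)" "col P 0 = v"
    using basis_mat[OF v(1,2)] by blast
  define B' where "B' = Q * B * P"
  have B': "B' \<in> carrier_mat (Suc m) (Suc m)" unfolding B'_def using PQ B by auto
  have cB: "c0z B'" and b00: "B' $$ (0,0) = \<mu>"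
    using conj_col0[OF PQ(1,2,4) B PQ(5) v(3)] unfolding B'_def by auto
  obtain ds1 where ds1: "\<forall>x \<in> carrier_vec m. iterv (lowr B') ds1 x = 0\<^sub>v m"
    using Suc.IH[OF lowr_carrier[OF B']] by blast
  have key: "iterv B' (ds1 @ [\<mu>]) y = 0\<^sub>v (Suc m)" if y: "y \<in> carrier_vec (Suc m)" for y
  proof -
    define z where "z = iterv B' ds1 y"
    have z: "z \<in> carrier_vec (Suc m)" unfolding z_def by (rule iterv_carrier[OF B' y])
    have lz: "lowv z = 0\<^sub>v m" unfolding z_def lowv_iter[OF B' cB y]
      using ds1 lowv_carrier[OF y] by auto
    have zi: "z $ Suc i = 0" if "i < m" for i
      using lowv_index[OF z that] lz that by auto
    have "B' *\<^sub>v z - \<mu> \<cdot>\<^sub>v z = 0\<^sub>v (Suc m)"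
    proof (rule eq_vecI)
      fix i assume "i < dim_vec (0\<^sub>v (Suc m) :: 'a vec)"
      then have i: "i < Suc m" by auto
      show "(B' *\<^sub>v z - \<mu> \<cdot>\<^sub>v z) $ i = 0\<^sub>v (Suc m) $ i"
      proof (cases i)
        case 0
        have "(B' *\<^sub>v z) $ 0 = B'$$(0,0) * z$0" by (subst vec_entry[OF B' z]) (auto simp: zi)
        then show ?thesis using z B' i b00 0 by auto
      next
        case (Suc i')
        have "lowv (B' *\<^sub>v z - \<mu> \<cdot>\<^sub>v z) = 0\<^sub>v m"
          unfolding lowv_step[OF B' cB z] lz using lowr_carrier[OF B'] by auto
        then have "lowv (B' *\<^sub>v z - \<mu> \<cdot>\<^sub>v z) $ i' = 0" using Suc i by auto
        then show ?thesis using Suc i B' z by (auto simp: lowv_def)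
      qed
    qed (use B' z in auto)
    then show ?thesis unfolding iterv_append z_def by simp
  qed
  have conj_it: "iterv B ds x = P *\<^sub>v iterv B' ds (Q *\<^sub>v x)" if "x \<in> carrier_vec (Suc m)" for ds x
    using that
  proof (induction ds arbitrary: x)
    case Nil
    then show ?case using PQ by (simp add: assoc_mult_mat_vec[symmetric, of _ "Suc m" "Suc m" _ "Suc m"])
  next
    case (Cons d ds)
    have x': "B *\<^sub>v x - d \<cdot>\<^sub>v x \<in> carrier_vec (Suc m)" using B Cons.prems by auto
    have "Q *\<^sub>v (B *\<^sub>v x - d \<cdot>\<^sub>v x) = B' *\<^sub>v (Q *\<^sub>v x) - d \<cdot>\<^sub>v (Q *\<^sub>v x)"
    proof -
      have "B' *\<^sub>v (Q *\<^sub>v x) = Q *\<^sub>v (B *\<^sub>v x)"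
      proof -
        have PQx: "P *\<^sub>v (Q *\<^sub>v x) = x" using PQ Cons.prems
          by (metis assoc_mult_mat_vec one_mult_mat_vec)
        have "B' *\<^sub>v (Q *\<^sub>v x) = Q *\<^sub>v (B *\<^sub>v (P *\<^sub>v (Q *\<^sub>v x)))"
          unfolding B'_def using PQ B Cons.prems
          by (simp add: assoc_mult_mat_vec[of _ "Suc m" "Suc m" _ "Suc m"])
        then show ?thesis unfolding PQx .
      qed
      then show ?thesis using PQ B Cons.prems by (simp add: mult_minus_distrib_mat_vec mult_mat_vec)
    qed
    then show ?case using Cons.IH[OF x'] by simp
  qed
  show ?case
  proof (intro exI[of _ "ds1 @ [\<mu>]"] ballI)
    fix x :: "'a vec" assume x: "x \<in> carrier_vec (Suc m)"
    have "Q *\<^sub>v x \<in> carrier_vec (Suc m)" using PQ x by auto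
    then show "iterv B (ds1 @ [\<mu>]) x = 0\<^sub>v (Suc m)"
      unfolding conj_it[OF x] key[OF \<open>Q *\<^sub>v x \<in> carrier_vec (Suc m)\<close>] using PQ by auto
  qed
qed




lemma common_eigen:
  fixes S B :: "'a::alg_closed_field mat"
  assumes S: "S \<in> carrier_mat (Suc m) (Suc m)" and B: "B \<in> carrier_mat (Suc m) (Suc m)"
    and comm: "S * B = B * S"
  shows "\<exists>lam \<mu> w. w \<in> carrier_vec (Suc m) \<and> w \<noteq> 0\<^sub>v (Suc m) \<and> S *\<^sub>v w = lam \<cdot>\<^sub>v w \<and> B *\<^sub>v w = \<mu> \<cdot>\<^sub>v w"
proof -
  obtain lam v where v: "v \<in> carrier_vec (Suc m)" "v \<noteq> 0\<^sub>v (Suc m)" "S *\<^sub>v v = lam \<cdot>\<^sub>v v"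
    using eigen_exists[OF S] by blast
  obtain ds where ds: "\<forall>x \<in> carrier_vec (Suc m). iterv B ds x = 0\<^sub>v (Suc m)"
    using annihilate[OF B] by blast
  define f where "f k = iterv B (take k ds) v" for k
  have step: "S *\<^sub>v (B *\<^sub>v w - d \<cdot>\<^sub>v w) = lam \<cdot>\<^sub>v (B *\<^sub>v w - d \<cdot>\<^sub>v w)"
    if w: "w \<in> carrier_vec (Suc m)" and Sw: "S *\<^sub>v w = lam \<cdot>\<^sub>v w" for w d
  proof -
    have "S *\<^sub>v (B *\<^sub>v w) = (S * B) *\<^sub>v w" using assoc_mult_mat_vec[OF S B w] by simp
    also have "\<dots> = (B * S) *\<^sub>v w" using comm by simp
    also have "\<dots> = B *\<^sub>v (S *\<^sub>v w)" using assoc_mult_mat_vec[OF B S w] by simp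
    also have "\<dots> = lam \<cdot>\<^sub>v (B *\<^sub>v w)" unfolding Sw by (rule mult_mat_vec[OF B w])
    finally have 1: "S *\<^sub>v (B *\<^sub>v w) = lam \<cdot>\<^sub>v (B *\<^sub>v w)" .
    have 2: "S *\<^sub>v (d \<cdot>\<^sub>v w) = d \<cdot>\<^sub>v (lam \<cdot>\<^sub>v w)" unfolding Sw[symmetric] by (rule mult_mat_vec[OF S w])
    have "S *\<^sub>v (B *\<^sub>v w - d \<cdot>\<^sub>v w) = S *\<^sub>v (B *\<^sub>v w) - S *\<^sub>v (d \<cdot>\<^sub>v w)"
      using S B w by (subst mult_minus_distrib_mat_vec[OF S]) auto
    also have "\<dots> = lam \<cdot>\<^sub>v (B *\<^sub>v w) - d \<cdot>\<^sub>v (lam \<cdot>\<^sub>v w)" unfolding 1 2 ..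
    also have "\<dots> = lam \<cdot>\<^sub>v (B *\<^sub>v w - d \<cdot>\<^sub>v w)"
      by (rule eq_vecI) (use B w in \<open>auto simp: algebra_simps\<close>)
    finally show ?thesis .
  qed
  have fS: "f k \<in> carrier_vec (Suc m) \<and> S *\<^sub>v f k = lam \<cdot>\<^sub>v f k" for k
  proof (induction k)
    case 0
    then show ?case using v by (simp add: f_def)
  next
    case (Suc k)
    show ?case
    proof (cases "k < length ds")
      case True
      have "f (Suc k) = B *\<^sub>v f k - (ds ! k) \<cdot>\<^sub>v f k"
        unfolding f_def using True by (simp add: take_Suc_conv_app_nth iterv_append)
      then show ?thesis using Suc step[of "f k"] B by auto
    next
      case False
      then have "f (Suc k) = f k" unfolding f_def by simp
      then show ?thesis using Suc by simp
    qed
  qed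
  have f0: "f 0 \<noteq> 0\<^sub>v (Suc m)" using v by (simp add: f_def)
  have fl: "f (length ds) = 0\<^sub>v (Suc m)" using ds v by (simp add: f_def)
  define K where "K = (LEAST k. f k = 0\<^sub>v (Suc m))"
  have fK: "f K = 0\<^sub>v (Suc m)" unfolding K_def using fl by (rule LeastI)
  have Kl: "K \<le> length ds" unfolding K_def using fl by (rule Least_le)
  have K0: "K > 0" using fK f0 by (cases K) auto
  have fK1: "f (K - 1) \<noteq> 0\<^sub>v (Suc m)"
    using not_less_Least[of "K - 1" "\<lambda>k. f k = 0\<^sub>v (Suc m)"] K0 unfolding K_def by auto
  define k where "k = K - 1"
  have kl: "k < length ds" using Kl K0 unfolding k_def by auto
  have "f (Suc k) = B *\<^sub>v f k - (ds ! k) \<cdot>\<^sub>v f k"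
    unfolding f_def using kl by (simp add: take_Suc_conv_app_nth iterv_append)
  moreover have "f (Suc k) = 0\<^sub>v (Suc m)" using fK K0 unfolding k_def by simp
  ultimately have H: "B *\<^sub>v f k - (ds ! k) \<cdot>\<^sub>v f k = 0\<^sub>v (Suc m)" by simp
  have fk: "f k \<in> carrier_vec (Suc m)" using fS by blast
  have "B *\<^sub>v f k = (ds ! k) \<cdot>\<^sub>v f k"
  proof (rule eq_vecI)
    fix i assume "i < dim_vec (ds!k \<cdot>\<^sub>v f k)"
    then have i: "i < Suc m" using fk by auto
    from arg_cong[OF H, of "\<lambda>v :: 'a vec. v $ i"] show "(B *\<^sub>v f k) $ i = (ds!k \<cdot>\<^sub>v f k) $ i"
      using i fk B by auto
  qed (use fk B in auto)
  then show ?thesis using fS[of k] fK1 unfolding k_def by blast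
qed

lemma simul:
  fixes S B :: "'a::alg_closed_field mat"
  shows "S \<in> carrier_mat n n \<Longrightarrow> B \<in> carrier_mat n n \<Longrightarrow> S * B = B * S \<Longrightarrow>
    \<exists>ps. length ps = n \<and> (\<forall>j k. char_poly (S ^\<^sub>m j * B ^\<^sub>m k) = (\<Prod>(l,m)\<leftarrow>ps. [:-(l^j * m^k), 1:]))"
proof (induction n arbitrary: S B)
  case 0
  have "char_poly (S ^\<^sub>m j * B ^\<^sub>m k) = 1" for j k
    using 0 by (subst char_poly_upper_triangular[of _ 0]) (auto simp: upper_triangular_def diag_mat_def)
  then show ?case by (intro exI[of _ "[]"]) auto
next
  case (Suc m)
  note S = Suc.prems(1) and B = Suc.prems(2) and comm = Suc.prems(3)
  obtain lam \<mu> w where w: "w \<in> carrier_vec (Suc m)" "w \<noteq> 0\<^sub>v (Suc m)" "S *\<^sub>v w = lam \<cdot>\<^sub>v w" "B *\<^sub>v w = \<mu> \<cdot>\<^sub>v w"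
    using common_eigen[OF S B comm] by blast
  obtain P Q where PQ: "P \<in> carrier_mat (Suc m) (Suc m)" "Q \<in> carrier_mat (Suc m) (Suc m)"
    "P * Q = 1\<^sub>m (Suc m)" "Q * P = 1\<^sub>m (Suc m)" "col P 0 = w"
    using basis_mat[OF w(1,2)] by blast
  define S' where "S' = Q * S * P"
  define B' where "B' = Q * B * P"
  have S': "S' \<in> carrier_mat (Suc m) (Suc m)" unfolding S'_def using PQ S by auto
  have B': "B' \<in> carrier_mat (Suc m) (Suc m)" unfolding B'_def using PQ B by auto
  have cS: "c0z S'" and s00: "S' $$ (0,0) = lam"
    using conj_col0[OF PQ(1,2,4) S PQ(5) w(3)] unfolding S'_def by auto
  have cB: "c0z B'" and b00: "B' $$ (0,0) = \<mu>"
    using conj_col0[OF PQ(1,2,4) B PQ(5) w(4)] unfolding B'_def by auto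
  note cm = conj_mult[OF PQ(1-4)] and cpw = conj_pow[OF PQ(1-4)] and ccp = conj_cp[OF PQ(1-4)]
  have "S' * B' = B' * S'" unfolding S'_def B'_def using cm[OF S B] cm[OF B S] comm by simp
  then have lcomm: "lowr S' * lowr B' = lowr B' * lowr S'"
    using mult_c0z(3)[OF S' B' cS cB] mult_c0z(3)[OF B' S' cB cS] by simp
  obtain ps1 where ps1: "length ps1 = m"
    "\<And>j k. char_poly (lowr S' ^\<^sub>m j * lowr B' ^\<^sub>m k) = (\<Prod>(l,m)\<leftarrow>ps1. [:-(l^j * m^k), 1:])"
    using Suc.IH[OF lowr_carrier[OF S'] lowr_carrier[OF B'] lcomm] by blast
  have "char_poly (S ^\<^sub>m j * B ^\<^sub>m k) = (\<Prod>(l,m)\<leftarrow>(lam,\<mu>)#ps1. [:-(l^j * m^k), 1:])" for j k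
  proof -
    have Sj: "S' ^\<^sub>m j \<in> carrier_mat (Suc m) (Suc m)" and Bk: "B' ^\<^sub>m k \<in> carrier_mat (Suc m) (Suc m)"
      using S' B' by auto
    note pS = pow_c0z[OF S' cS, of j] and pB = pow_c0z[OF B' cB, of k]
    have "char_poly (S ^\<^sub>m j * B ^\<^sub>m k) = char_poly (Q * (S ^\<^sub>m j * B ^\<^sub>m k) * P)"
      using S B by (subst ccp) auto
    also have "Q * (S ^\<^sub>m j * B ^\<^sub>m k) * P = S' ^\<^sub>m j * B' ^\<^sub>m k"
      unfolding S'_def B'_def using S B by (simp add: cm cpw)
    also have "char_poly (S' ^\<^sub>m j * B' ^\<^sub>m k) = [:- (lam^j * \<mu>^k), 1:] * char_poly (lowr S' ^\<^sub>m j * lowr B' ^\<^sub>m k)"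
      using cp_c0z[OF mult_carrier_mat[OF Sj Bk] mult_c0z(1)[OF Sj Bk]] mult_c0z(2,3)[OF Sj Bk] pS pB s00 b00
      by simp
    finally show ?thesis using ps1(2) by simp
  qed
  then show ?case using ps1(1) by (intro exI[of _ "(lam,\<mu>)#ps1"]) auto
qed




definition dotp :: "nat \<Rightarrow> (nat \<Rightarrow> int) \<Rightarrow> (nat \<Rightarrow> int) \<Rightarrow> int" where
  "dotp r u v = (\<Sum>i<r. u i * v i)"

definition dep :: "nat \<Rightarrow> (nat \<Rightarrow> int) \<Rightarrow> (nat \<Rightarrow> int) list \<Rightarrow> bool" where
  "dep r e rs \<longleftrightarrow> (\<exists>D c. D \<noteq> 0 \<and> (\<forall>i<r. D * e i = (\<Sum>j<length rs. c j * (rs!j) i)))"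

lemma dotp_lin1: "dotp r (\<lambda>i. a * x i - b * y i) v = a * dotp r x v - b * dotp r y v"
  by (simp add: dotp_def sum_subtractf sum_distrib_left algebra_simps)

lemma dotp_lin2: "dotp r u (\<lambda>i. a * x i - b * y i) = a * dotp r u x - b * dotp r u y"
  by (simp add: dotp_def sum_subtractf sum_distrib_left algebra_simps)

lemma sum_cons_shift:
  "(\<Sum>j<length (x#xs). c j * ((x#xs)!j) i) = c 0 * x i + (\<Sum>j<length xs. c (Suc j) * (xs!j) i)"
  by (simp add: sum.lessThan_Suc_shift del: sum.lessThan_Suc)

lemma dep_dotp:
  assumes "\<forall>i<r. D * e i = (\<Sum>j<length rs. c j * (rs!j) i)" and "\<forall>x\<in>set rs. dotp r u x = 0"
  shows "D * dotp r u e = 0"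
proof -
  have "D * dotp r u e = (\<Sum>i<r. u i * (D * e i))"
    by (simp add: dotp_def sum_distrib_left algebra_simps)
  also have "\<dots> = (\<Sum>i<r. u i * (\<Sum>j<length rs. c j * (rs!j) i))"
    using assms(1) by (intro sum.cong) auto
  also have "\<dots> = (\<Sum>j<length rs. c j * dotp r u (rs!j))"
    by (simp add: dotp_def sum_distrib_left algebra_simps sum.swap[of _ "{..<r}"])
  also have "\<dots> = 0" using assms(2) by (intro sum.neutral) auto
  finally show ?thesis .
qed

lemma functional:
  "\<not> dep r e rs \<Longrightarrow> \<exists>u. (\<forall>x\<in>set rs. dotp r u x = 0) \<and> dotp r u e \<noteq> 0"
proof (induction rs arbitrary: e)
  case Nil
  then obtain i where i: "i < r" "e i \<noteq> 0"
    unfolding dep_def by (metis lessThan_iff list.size(3) mult_1 sum.neutral_const not_less0 lessThan_0 sum.empty one_neq_zero)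
  have "dotp r (\<lambda>l. if l = i then 1 else 0) e = e i"
    unfolding dotp_def by (subst sum.cong[OF refl, of _ _ "\<lambda>l. if l = i then e l else 0"]) (use i in auto)
  then show ?case using i by (intro exI[of _ "\<lambda>l. if l = i then 1 else 0"]) auto
next
  case (Cons r0 rs)
  show ?case
  proof (cases "dep r r0 rs")
    case True
    then obtain D0 c0 where D0: "D0 \<noteq> 0" "\<forall>i<r. D0 * r0 i = (\<Sum>j<length rs. c0 j * (rs!j) i)"
      unfolding dep_def by blast
    have "\<not> dep r e rs"
    proof
      assume "dep r e rs"
      then obtain D c where D: "D \<noteq> 0" "\<forall>i<r. D * e i = (\<Sum>j<length rs. c j * (rs!j) i)"
        unfolding dep_def by blast
      have "dep r e (r0 # rs)" unfolding dep_def
        by (rule exI[of _ D], rule exI[of _ "\<lambda>j. if j = 0 then 0 else c (j - 1)"]) (use D in \<open>simp only: sum_cons_shift, auto\<close>)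
      then show False using Cons.prems by blast
    qed
    from Cons.IH[OF this] obtain u where u: "\<forall>x\<in>set rs. dotp r u x = 0" "dotp r u e \<noteq> 0" by blast
    have "D0 * dotp r u r0 = 0" using dep_dotp[OF D0(2) u(1)] .
    then have "dotp r u r0 = 0" using D0(1) by simp
    then show ?thesis using u by (intro exI[of _ u]) auto
  next
    case False
    from Cons.IH[OF False] obtain w where w: "\<forall>x\<in>set rs. dotp r w x = 0" "dotp r w r0 \<noteq> 0" by blast
    define e2 where "e2 = (\<lambda>i. dotp r w r0 * e i - dotp r w e * r0 i)"
    have "\<not> dep r e2 rs"
    proof
      assume "dep r e2 rs"
      then obtain D c where D: "D \<noteq> 0" "\<forall>i<r. D * e2 i = (\<Sum>j<length rs. c j * (rs!j) i)"
        unfolding dep_def by blast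
      have "dep r e (r0 # rs)" unfolding dep_def
      proof (rule exI[of _ "D * dotp r w r0"], rule exI[of _ "\<lambda>j. if j = 0 then D * dotp r w e else c (j - 1)"], intro conjI allI impI)
        show "D * dotp r w r0 \<noteq> 0" using D(1) w(2) by simp
        fix i assume i: "i < r"
        have "D * dotp r w r0 * e i = D * e2 i + D * dotp r w e * r0 i"
          unfolding e2_def by (simp add: algebra_simps)
        also have "\<dots> = (\<Sum>j<length rs. c j * (rs!j) i) + D * dotp r w e * r0 i" using D(2) i by simp
        finally show "D * dotp r w r0 * e i = (\<Sum>j<length (r0 # rs). (if j = 0 then D * dotp r w e else c (j - 1)) * ((r0 # rs) ! j) i)"
          by (simp only: sum_cons_shift) simp
      qed
      then show False using Cons.prems by blast
    qed
    from Cons.IH[OF this] obtain u0 where u0: "\<forall>x\<in>set rs. dotp r u0 x = 0" "dotp r u0 e2 \<noteq> 0" by blast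
    define u where "u = (\<lambda>i. dotp r w r0 * u0 i - dotp r u0 r0 * w i)"
    have ur: "\<forall>x\<in>set rs. dotp r u x = 0" using u0(1) w(1) unfolding u_def dotp_lin1 by simp
    have ur0: "dotp r u r0 = 0" unfolding u_def dotp_lin1 by simp
    have we2: "dotp r w e2 = 0" unfolding e2_def dotp_lin2 by simp
    have "dotp r u e2 = dotp r w r0 * dotp r u e"
      unfolding e2_def dotp_lin2 ur0 by simp
    moreover have "dotp r u e2 = dotp r w r0 * dotp r u0 e2"
      unfolding u_def dotp_lin1 we2 by simp
    ultimately have "dotp r u e \<noteq> 0" using u0(2) w(2) by auto
    then show ?thesis using ur ur0 by (intro exI[of _ u]) auto
  qed
qed




lemma powi_sum: "(x::'k::field) \<noteq> 0 \<Longrightarrow> x powi (\<Sum>j\<in>A. f j) = (\<Prod>j\<in>A. x powi f j)"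
  by (induction A rule: infinite_finite_induct) (auto simp: power_int_add)

lemma powi_prod: "(\<Prod>j\<in>A. f j :: 'k::field) powi n = (\<Prod>j\<in>A. f j powi n)"
  by (induction A rule: infinite_finite_induct) (auto simp: power_int_mult_distrib)

lemma ev_comb:
  fixes g :: "nat \<Rightarrow> 'k::field"
  assumes g: "\<forall>i<r. g i \<noteq> 0"
  shows "(\<Prod>i<r. g i powi (\<Sum>j<L. c j * R j i)) = (\<Prod>j<L. (\<Prod>i<r. g i powi R j i) powi c j)"
proof -
  have "(\<Prod>i<r. g i powi (\<Sum>j<L. c j * R j i)) = (\<Prod>i<r. \<Prod>j<L. (g i powi R j i) powi c j)"
    using g by (intro prod.cong refl) (auto simp: powi_sum power_int_mult[symmetric] mult.commute)
  also have "\<dots> = (\<Prod>j<L. \<Prod>i<r. (g i powi R j i) powi c j)" by (rule prod.swap)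
  also have "\<dots> = (\<Prod>j<L. (\<Prod>i<r. g i powi R j i) powi c j)" by (simp add: powi_prod)
  finally show ?thesis .
qed

lemma prod_delta_powi:
  fixes g :: "nat \<Rightarrow> 'k::field"
  assumes "a < r"
  shows "(\<Prod>i<r. g i powi (if i = a then c else 0)) = g a powi c"
proof -
  have "(\<Prod>i<r. g i powi (if i = a then c else 0)) = (\<Prod>i<r. if i = a then g a powi c else 1)"
    by (intro prod.cong) auto
  also have "\<dots> = g a powi c" using assms by (simp add: prod.delta)
  finally show ?thesis .
qed

lemma prod_delta3:
  fixes g :: "nat \<Rightarrow> 'k::field"
  assumes g: "\<forall>i<r. g i \<noteq> 0" and abc: "a < r" "b < r" "c < r"
  shows "(\<Prod>l<r. g l powi ((if l = a then x else 0) + (if l = b then y else 0) + (if l = c then z else 0)))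
     = g a powi x * g b powi y * g c powi z"
proof -
  have "(\<Prod>l<r. g l powi ((if l = a then x else 0) + (if l = b then y else 0) + (if l = c then z else 0)))
    = (\<Prod>l<r. g l powi (if l = a then x else 0) * g l powi (if l = b then y else 0) * g l powi (if l = c then z else 0))"
    using g by (intro prod.cong refl) (auto simp: power_int_add)
  also have "\<dots> = g a powi x * g b powi y * g c powi z"
    using abc by (simp add: prod.distrib prod_delta_powi)
  finally show ?thesis .
qed

lemma dotp_delta3:
  assumes abc: "a < r" "b < r" "c < r"
  shows "dotp r u (\<lambda>l. (if l = a then x else 0) + (if l = b then y else 0) + (if l = c then z else 0))
     = u a * x + u b * y + u c * z"
proof -
  have d: "(\<Sum>l<r. u l * (if l = a' then x' else 0)) = u a' * x'" if "a' < r" for a' x'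
  proof -
    have "(\<Sum>l<r. u l * (if l = a' then x' else 0)) = (\<Sum>l<r. if l = a' then u a' * x' else 0)"
      by (intro sum.cong) auto
    also have "\<dots> = u a' * x'" using that by simp
    finally show ?thesis .
  qed
  show ?thesis unfolding dotp_def using abc
    by (simp add: distrib_left sum.distrib d)
qed

lemma key_torsion:
  fixes g :: "nat \<Rightarrow> 'k::field"
  assumes g: "\<forall>i<r. g i \<noteq> 0" and k0: "k0 < r"
    and rels: "\<forall>j<length rels. (\<Prod>i<r. g i powi (rels!j) i) = 1"
    and d: "dep r (\<lambda>i. if i = k0 then 1 else 0) rels"
  shows "\<exists>n>0. g k0 ^ n = 1"
proof -
  obtain D c where D: "D \<noteq> 0" "\<forall>i<r. D * (if i = k0 then 1 else 0) = (\<Sum>j<length rels. c j * (rels!j) i)"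
    using d unfolding dep_def by blast
  have "g k0 powi D = (\<Prod>i<r. g i powi (if i = k0 then D else 0))"
    using k0 by (simp add: prod_delta_powi)
  also have "\<dots> = (\<Prod>i<r. g i powi (\<Sum>j<length rels. c j * (rels!j) i))"
  proof (intro prod.cong refl)
    fix i assume "i \<in> {..<r}"
    then have "D * (if i = k0 then 1 else 0) = (\<Sum>j<length rels. c j * (rels!j) i)" using D(2) by auto
    then show "g i powi (if i = k0 then D else 0) = g i powi (\<Sum>j<length rels. c j * (rels!j) i)"
      by (cases "i = k0") auto
  qed
  also have "\<dots> = (\<Prod>j<length rels. (\<Prod>i<r. g i powi (rels!j) i) powi c j)"
    by (rule ev_comb[OF g])
  also have "\<dots> = 1" using rels by (intro prod.neutral) auto
  finally have gD: "g k0 powi D = 1" .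
  show ?thesis
  proof (cases "D > 0")
    case True
    have "g k0 ^ nat D = 1" using gD power_int_nonneg_exp[of D "g k0"] True by simp
    then show ?thesis using True by (intro exI[of _ "nat D"]) auto
  next
    case False
    then have "-D > 0" using D(1) by simp
    have "g k0 powi D = inverse (g k0 powi (-D))" using power_int_minus[of "g k0" "-D"] by simp
    then have "g k0 powi (-D) = 1" using gD by (metis inverse_1 inverse_inverse_eq)
    then have "g k0 ^ nat (-D) = 1" using power_int_nonneg_exp[of "-D" "g k0"] \<open>-D > 0\<close> by simp
    then show ?thesis using \<open>-D > 0\<close> by (intro exI[of _ "nat (-D)"]) auto
  qed
qed




lemma core:
  fixes ps :: "('k::field \<times> 'k) list"
  assumes nz: "\<forall>(a,b)\<in>set ps. a \<noteq> 0 \<and> b \<noteq> 0"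
    and m1: "mset (map (\<lambda>(a,b). a*b) ps) = mset (map fst ps)"
    and m2: "mset (map (\<lambda>(a,b). a*b^2) ps) = mset (map fst ps)"
    and k: "k < length ps"
  shows "\<exists>n>0. snd (ps!k) ^ n = 1"
proof (rule ccontr)
  assume nt: "\<not> (\<exists>n>0. snd (ps!k) ^ n = 1)"
  define N where "N = length ps"
  define r where "r = N + N"
  define g where "g i = (if i < N then fst (ps!i) else snd (ps!(i-N)))" for i
  have g: "\<forall>i<r. g i \<noteq> 0"
  proof (intro allI impI)
    fix i
    have nz': "\<forall>z\<in>set ps. fst z \<noteq> 0 \<and> snd z \<noteq> 0" using nz by auto
    assume "i < r"
    show "g i \<noteq> 0"
    proof (cases "i < N")
      case True
      then show ?thesis using nz' nth_mem[of i ps] unfolding g_def N_def by auto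
    next
      case False
      then have "i - N < length ps" using \<open>i < r\<close> unfolding r_def N_def by auto
      then show ?thesis using nz' nth_mem[of "i - N" ps] False unfolding g_def N_def by auto
    qed
  qed
  have ga: "g i = fst (ps!i)" if "i < N" for i using that g_def by simp
  have gb: "g (N+i) = snd (ps!i)" for i using g_def by simp
  have anz: "fst (ps!i) \<noteq> 0" "snd (ps!i) \<noteq> 0" if "i < N" for i
    using g that ga[OF that] gb[of i] unfolding r_def by (metis add_less_cancel_left trans_less_add1)+
  obtain p where p: "p permutes {..<N}" "permute_list p (map fst ps) = map (\<lambda>(a,b). a*b) ps"
    using mset_eq_permutation[OF m1] unfolding N_def by auto
  obtain q where q: "q permutes {..<N}" "permute_list q (map fst ps) = map (\<lambda>(a,b). a*b^2) ps"
    using mset_eq_permutation[OF m2] unfolding N_def by auto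
  have pN: "p i < N" if "i < N" for i using permutes_in_image[OF p(1), of i] that by auto
  have qN: "q i < N" if "i < N" for i using permutes_in_image[OF q(1), of i] that by auto
  have hp: "fst (ps!(p i)) = fst (ps!i) * snd (ps!i)" if i: "i < N" for i
  proof -
    have "permute_list p (map fst ps) ! i = map fst ps ! p i"
      using p(1) i unfolding N_def by (intro permute_list_nth) auto
    then show ?thesis using p(2) i pN[OF i] unfolding N_def by (auto split: prod.splits)
  qed
  have hq: "fst (ps!(q i)) = fst (ps!i) * snd (ps!i)^2" if i: "i < N" for i
  proof -
    have "permute_list q (map fst ps) ! i = map fst ps ! q i"
      using q(1) i unfolding N_def by (intro permute_list_nth) auto
    then show ?thesis using q(2) i qN[OF i] unfolding N_def by (auto split: prod.splits)
  qed
  define \<rho> where "\<rho> i = (\<lambda>l::nat. (if l = p i then 1 else 0) + (if l = i then -1 else 0) + (if l = N + i then -1 else (0::int)))" for i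
  define \<rho>' where "\<rho>' i = (\<lambda>l::nat. (if l = q i then 1 else 0) + (if l = i then -1 else 0) + (if l = N + i then -2 else (0::int)))" for i
  define rels where "rels = map \<rho> [0..<N] @ map \<rho>' [0..<N]"
  have evr: "(\<Prod>l<r. g l powi \<rho> i l) = 1" if i: "i < N" for i
  proof -
    have "(\<Prod>l<r. g l powi \<rho> i l) = g (p i) powi 1 * g i powi (-1) * g (N+i) powi (-1)"
      unfolding \<rho>_def by (rule prod_delta3[OF g]) (use i pN[OF i] r_def in auto)
    also have "\<dots> = 1" using g i pN[OF i] unfolding ga[OF pN[OF i]] ga[OF i] gb hp[OF i] r_def
      using anz[OF i] by (simp add: field_simps)
    finally show ?thesis .
  qed
  have evr': "(\<Prod>l<r. g l powi \<rho>' i l) = 1" if i: "i < N" for i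
  proof -
    have "(\<Prod>l<r. g l powi \<rho>' i l) = g (q i) powi 1 * g i powi (-1) * g (N+i) powi (-2)"
      unfolding \<rho>'_def by (rule prod_delta3[OF g]) (use i qN[OF i] r_def in auto)
    also have "\<dots> = 1" using g i qN[OF i] unfolding ga[OF qN[OF i]] ga[OF i] gb hq[OF i] r_def
      using anz[OF i] by (simp add: field_simps power_int_minus)
    finally show ?thesis .
  qed
  have rels_ev: "\<forall>j<length rels. (\<Prod>i<r. g i powi (rels!j) i) = 1"
    unfolding rels_def using evr evr' by (auto simp: nth_append)
  define e where "e = (\<lambda>i::nat. if i = N + k then 1 else (0::int))"
  have "\<not> dep r e rels"
  proof
    assume "dep r e rels"
    from key_torsion[OF g _ rels_ev this[unfolded e_def]] have "\<exists>n>0. g (N+k) ^ n = 1"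
      using k unfolding r_def N_def by auto
    then show False using nt gb by auto
  qed
  from functional[OF this] obtain u where u: "\<forall>x\<in>set rels. dotp r u x = 0" "dotp r u e \<noteq> 0" by blast
  define x where "x i = u i" for i
  define y where "y i = u (N + i)" for i
  have xp: "x (p i) = x i + y i" if i: "i < N" for i
  proof -
    have "\<rho> i \<in> set rels" using i unfolding rels_def by auto
    then have "dotp r u (\<rho> i) = 0" using u(1) by blast
    moreover have "dotp r u (\<rho> i) = u (p i) * 1 + u i * (-1) + u (N+i) * (-1)"
      unfolding \<rho>_def by (rule dotp_delta3) (use i pN[OF i] r_def in auto)
    ultimately show ?thesis unfolding x_def y_def by simp
  qed
  have xq: "x (q i) = x i + 2 * y i" if i: "i < N" for i
  proof -
    have "\<rho>' i \<in> set rels" using i unfolding rels_def by auto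
    then have "dotp r u (\<rho>' i) = 0" using u(1) by blast
    moreover have "dotp r u (\<rho>' i) = u (q i) * 1 + u i * (-1) + u (N+i) * (-2)"
      unfolding \<rho>'_def by (rule dotp_delta3) (use i qN[OF i] r_def in auto)
    ultimately show ?thesis unfolding x_def y_def by simp
  qed
  have yk: "y k \<noteq> 0"
  proof -
    have "dotp r u e = (\<Sum>l<r. if l = N + k then u (N+k) else 0)"
      unfolding dotp_def e_def by (intro sum.cong) auto
    also have "\<dots> = u (N+k)" using k unfolding r_def N_def by simp
    finally show ?thesis using u(2) unfolding y_def by simp
  qed
  have s1: "(\<Sum>i<N. (x i + y i)^2) = (\<Sum>i<N. (x i)^2)"
  proof -
    have "(\<Sum>i<N. (x i)^2) = (\<Sum>i<N. (x (p i))^2)"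
      using sum.permute[OF p(1), of "\<lambda>i. (x i)^2"] by simp
    also have "\<dots> = (\<Sum>i<N. (x i + y i)^2)" using xp by (intro sum.cong) auto
    finally show ?thesis by simp
  qed
  have s2: "(\<Sum>i<N. (x i + 2 * y i)^2) = (\<Sum>i<N. (x i)^2)"
  proof -
    have "(\<Sum>i<N. (x i)^2) = (\<Sum>i<N. (x (q i))^2)"
      using sum.permute[OF q(1), of "\<lambda>i. (x i)^2"] by simp
    also have "\<dots> = (\<Sum>i<N. (x i + 2 * y i)^2)" using xq by (intro sum.cong) auto
    finally show ?thesis by simp
  qed
  have e1: "(\<Sum>i<N. (x i + y i)^2) = (\<Sum>i<N. (x i)^2) + 2 * (\<Sum>i<N. x i * y i) + (\<Sum>i<N. (y i)^2)"
    by (simp add: power2_sum sum.distrib sum_distrib_left mult.assoc)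
  have e2: "(\<Sum>i<N. (x i + 2 * y i)^2) = (\<Sum>i<N. (x i)^2) + 4 * (\<Sum>i<N. x i * y i) + 4 * (\<Sum>i<N. (y i)^2)"
    by (simp add: power2_sum sum.distrib sum_distrib_left power_mult_distrib algebra_simps)
  have "(\<Sum>i<N. (y i)^2) = 0" using s1 s2 e1 e2 by linarith
  then have "\<forall>i\<in>{..<N}. (y i)^2 = 0" by (subst sum_nonneg_eq_0_iff[symmetric]) auto
  then have "y k = 0" using k unfolding N_def by auto
  then show False using yk by simp
qed


lemma poly_linprod_zero: "poly (\<Prod>x\<leftarrow>xs. [:-x, 1:]) (c::'a::idom) = 0 \<longleftrightarrow> c \<in> set xs"
  by (induction xs) auto

lemma prod_list_remove1: "x \<in> set xs \<Longrightarrow> prod_list (map f xs) = (f x :: 'b::comm_monoid_mult) * prod_list (map f (remove1 x xs))"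
  by (induction xs) (auto simp: mult.left_commute)

lemma linprod_mset:
  "(\<Prod>x\<leftarrow>xs. [:-x, 1:]) = (\<Prod>x\<leftarrow>ys. [:-x, 1:]) \<Longrightarrow> mset xs = mset (ys :: 'a::idom list)"
proof (induction xs arbitrary: ys)
  case Nil
  show ?case
  proof (cases ys)
    case (Cons y ys')
    have "poly (\<Prod>x\<leftarrow>ys. [:-x, 1:]) y = 0" unfolding poly_linprod_zero Cons by simp
    then show ?thesis using Nil by simp
  qed simp
next
  case (Cons x xs)
  have "poly (\<Prod>x\<leftarrow>ys. [:-x, 1:]) x = 0" unfolding Cons.prems[symmetric] poly_linprod_zero by simp
  then have x: "x \<in> set ys" unfolding poly_linprod_zero .
  have "[:-x, 1:] * (\<Prod>x\<leftarrow>xs. [:-x, 1:]) = [:-x, 1:] * (\<Prod>x\<leftarrow>remove1 x ys. [:-x, 1:])"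
    using Cons.prems prod_list_remove1[OF x, of "\<lambda>x. [:-x, 1:]"] by simp
  moreover have nz: "[:-x, 1:] \<noteq> (0::'a poly)" by simp
  ultimately have "(\<Prod>x\<leftarrow>xs. [:-x, 1:]) = (\<Prod>x\<leftarrow>remove1 x ys. [:-x, 1:])"
    using mult_left_cancel[OF nz] by blast
  from Cons.IH[OF this] x show ?case by simp
qed

lemma prod_pairs: "(\<Prod>(l,m)\<leftarrow>ps. [:-(f l m), 1:]) = (\<Prod>x\<leftarrow>map (\<lambda>(l,m). f l m) ps. [:-x, 1:])"
  by (induction ps) auto

interpretation to_ac_hom: field_hom to_ac by unfold_locales auto

lemma det_ne0:
  fixes T :: "'a::field mat"
  assumes T: "T \<in> carrier_mat d d" and inv: "invertible_mat T"
  shows "det T \<noteq> 0"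
proof -
  obtain Ti where Ti: "T * Ti = 1\<^sub>m d" "Ti * T = 1\<^sub>m (dim_row Ti)"
    using inv T unfolding invertible_mat_def inverts_mat_def by auto
  have "dim_col Ti = d" using arg_cong[OF Ti(1), of dim_col] by simp
  moreover have "dim_row Ti = d" using arg_cong[OF Ti(2), of dim_col] T by simp
  ultimately have Tic: "Ti \<in> carrier_mat d d" by auto
  have "det T * det Ti = 1" using det_mult[OF T Tic] Ti(1) by simp
  then show ?thesis by auto
qed

lemma no_zero_ev:
  fixes S :: "'a::field mat"
  assumes S: "S \<in> carrier_mat d d" and dS: "det S \<noteq> 0"
  shows "\<not> eigenvalue S 0"
proof
  assume "eigenvalue S 0"
  then obtain v where v: "v \<in> carrier_vec d" "v \<noteq> 0\<^sub>v d" "S *\<^sub>v v = 0 \<cdot>\<^sub>v v"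
    unfolding eigenvalue_def eigenvector_def using S by auto
  have "0 \<cdot>\<^sub>v v = 0\<^sub>v d" using v(1) by (intro eq_vecI) auto
  then have "v \<in> carrier_vec d" "v \<noteq> 0\<^sub>v d" "S *\<^sub>v v = 0\<^sub>v d" using v by auto
  then have "det S = 0" using det_0_iff_vec_prod_zero[OF S] by blast
  then show False using dS by simp
qed

theorem theorem6p2:
  fixes T A :: "'a :: field mat" and d :: nat
  assumes "d \<ge> 1"
    and "T \<in> carrier_mat d d" and "A \<in> carrier_mat d d"
    and "invertible_mat T" and "invertible_mat A"
    and "T * A = A * T"
    and "similar_mat T (T * A)"
    and "similar_mat T (T * A ^\<^sub>m 2)"
  shows "\<forall>c. eigenvalue (map_mat to_ac A) c \<longrightarrow> (\<exists>n>0. c ^ n = 1)"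
proof (intro allI impI)
  fix c assume evc: "eigenvalue (map_mat to_ac A) c"
  note T = assms(2) and A = assms(3)
  define S where "S = map_mat to_ac T"
  define B where "B = map_mat to_ac A"
  have S: "S \<in> carrier_mat d d" and B: "B \<in> carrier_mat d d" unfolding S_def B_def using T A by auto
  have hTA: "map_mat to_ac (T * A) = S * B" unfolding S_def B_def by (rule to_ac_hom.mat_hom_mult[OF T A])
  have hAT: "map_mat to_ac (A * T) = B * S" unfolding S_def B_def by (rule to_ac_hom.mat_hom_mult[OF A T])
  have comm: "S * B = B * S" using hTA hAT assms(6) by simp
  have A2: "A ^\<^sub>m 2 = A * A" using A by (simp add: numeral_2_eq_2)
  have hTA2: "map_mat to_ac (T * A ^\<^sub>m 2) = S * (B * B)"
    unfolding A2 S_def B_def using T A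
    by (simp add: to_ac_hom.mat_hom_mult[OF T mult_carrier_mat[OF A A]] to_ac_hom.mat_hom_mult[OF A A])
  obtain ps where ps: "length ps = d"
    "\<And>j k. char_poly (S ^\<^sub>m j * B ^\<^sub>m k) = (\<Prod>(l,m)\<leftarrow>ps. [:-(l^j * m^k), 1:])"
    using simul[OF S B comm] by blast
  have c10: "char_poly S = (\<Prod>x\<leftarrow>map fst ps. [:-x, 1:])"
  proof -
    have "map (\<lambda>(l,m). l^1 * m^0) ps = map fst ps" by (induction ps) auto
    moreover have "S ^\<^sub>m 1 * B ^\<^sub>m 0 = S" using S B by simp
    ultimately show ?thesis using ps(2)[of 1 0] by (simp only: prod_pairs)
  qed
  have c11: "char_poly (S * B) = (\<Prod>x\<leftarrow>map (\<lambda>(l,m). l * m) ps. [:-x, 1:])"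
    using ps(2)[of 1 1] S B by (simp add: prod_pairs)
  have c12: "char_poly (S * (B * B)) = (\<Prod>x\<leftarrow>map (\<lambda>(l,m). l * m^2) ps. [:-x, 1:])"
    using ps(2)[of 1 2] S B by (simp add: prod_pairs numeral_2_eq_2 power2_eq_square assoc_mult_mat[of _ d d _ d _ d])
  have c01: "char_poly B = (\<Prod>x\<leftarrow>map snd ps. [:-x, 1:])"
  proof -
    have "map (\<lambda>(l,m). l^0 * m^1) ps = map snd ps" by (induction ps) auto
    moreover have "S ^\<^sub>m 0 * B ^\<^sub>m 1 = B" using S B by simp
    ultimately show ?thesis using ps(2)[of 0 1] by (simp only: prod_pairs)
  qed
  have cpS: "char_poly S = map_poly to_ac (char_poly T)" unfolding S_def by (rule to_ac_hom.char_poly_hom[OF T])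
  have cpT: "char_poly S = char_poly (S * B)"
  proof -
    have "char_poly S = map_poly to_ac (char_poly (T * A))" using cpS char_poly_similar[OF assms(7)] by simp
    also have "\<dots> = char_poly (map_mat to_ac (T * A))"
      by (rule to_ac_hom.char_poly_hom[OF mult_carrier_mat[OF T A], symmetric])
    finally show ?thesis using hTA by simp
  qed
  have cpT2: "char_poly S = char_poly (S * (B * B))"
  proof -
    have "char_poly S = map_poly to_ac (char_poly (T * A ^\<^sub>m 2))" using cpS char_poly_similar[OF assms(8)] by simp
    also have "\<dots> = char_poly (map_mat to_ac (T * A ^\<^sub>m 2))"
      by (rule to_ac_hom.char_poly_hom[OF mult_carrier_mat[OF T pow_carrier_mat[OF A]], symmetric])
    finally show ?thesis using hTA2 by simp
  qed
  have m1: "mset (map (\<lambda>(a,b). a*b) ps) = mset (map fst ps)"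
    by (rule linprod_mset) (use c10 c11 cpT in simp)
  have m2: "mset (map (\<lambda>(a,b). a*b^2) ps) = mset (map fst ps)"
    by (rule linprod_mset) (use c10 c12 cpT2 in simp)
  have dS: "det S \<noteq> 0" unfolding S_def using det_ne0[OF T assms(4)] to_ac_hom.hom_det by simp
  have dB: "det B \<noteq> 0" unfolding B_def using det_ne0[OF A assms(5)] to_ac_hom.hom_det by simp
  have nz: "\<forall>(a,b)\<in>set ps. a \<noteq> 0 \<and> b \<noteq> 0"
  proof (intro ballI, clarify)
    fix a b assume ab: "(a,b) \<in> set ps"
    have "poly (char_poly S) a = 0" unfolding c10 poly_linprod_zero using ab by force
    then have "eigenvalue S a" using eigenvalue_root_char_poly[OF S] by simp
    moreover have "poly (char_poly B) b = 0" unfolding c01 poly_linprod_zero using ab by force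
    then have "eigenvalue B b" using eigenvalue_root_char_poly[OF B] by simp
    ultimately show "a \<noteq> 0 \<and> b \<noteq> 0" using no_zero_ev[OF S dS] no_zero_ev[OF B dB] by auto
  qed
  have "poly (char_poly B) c = 0" using evc eigenvalue_root_char_poly[OF B] unfolding B_def by simp
  then have "c \<in> set (map snd ps)" unfolding c01 poly_linprod_zero .
  then obtain k where k: "k < length ps" "snd (ps ! k) = c" by (auto simp: in_set_conv_nth)
  show "\<exists>n>0. c ^ n = 1" using core[OF nz m1 m2 k(1)] k(2) by simp
qed

end
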